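(* For $\gamma\ge0$ let $P_1(\gamma),P_2(\gamma),\dots$ be i.i.d. Poisson random variables with parameter $\gamma$. Let $x\in\mathbb{R}$, $\delta>0$, $\lambda\ge0$, $\epsilon>0$, and set $\lambda^-_\epsilon=\max\{0,\lambda-\epsilon\}$, $\lambda^+_\epsilon=\lambda+\epsilon$. Then the following limit exists and $$\lim_{n\to\infty}\inf_{\gamma\in(\lambda-\epsilon,\lambda+\epsilon)\cap[0,\infty)}\frac1n\log\mathbb{P}\Big(\tfrac1n\textstyle\sum_{i=1}^nP_i(\gamma)\in(x-\delta,x+\delta)\Big)=\min_{\gamma\in\{\lambda^-_\epsilon,\lambda^+_\epsilon\}}\Big[-\inf_{a\in(x-\delta,x+\delta)}\ell(\gamma;a)\Big].$$
   Context: For $\gamma\ge0$: $\ell(\gamma;a)=\infty$ for $a<0$, $\ell(\gamma;0)=\gamma$, and $\ell(\gamma;a)=\gamma-a+a\log(a/\gamma)$ for $a>0$ (interpreted as $\infty$ when $\gamma=0$); this is the Fenchel–Legendre transform of the cumulant generating function of the Poisson($\gamma$) distribution. *)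

theory Defs
  imports "HOL-Probability.Probability"
begin

text \<open>Poisson distribution with parameter \<gamma> \<ge> 0 (the library's poisson_pmf
  is only specified for positive rate; rate 0 is the point mass at 0).\<close>
definition poisson :: "real \<Rightarrow> nat pmf" where
  "poisson \<gamma> = (if \<gamma> = 0 then return_pmf 0 else poisson_pmf \<gamma>)"

definition iid_poisson :: "real \<Rightarrow> nat \<Rightarrow> (nat \<Rightarrow> nat) pmf" where
  "iid_poisson \<gamma> n = Pi_pmf {1..n} 0 (\<lambda>_. poisson \<gamma>)"

definition ell :: "real \<Rightarrow> real \<Rightarrow> ereal" where
  "ell \<gamma> a = (if a < 0 then \<infinity>
              else if a = 0 then ereal \<gamma>
              else if \<gamma> = 0 then \<infinity>
              else ereal (\<gamma> - a + a * ln (a / \<gamma>)))"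

definition eln :: "real \<Rightarrow> ereal" where
  "eln p = (if p = 0 then -\<infinity> else ereal (ln p))"

end

theory Submission
  imports Defs "HOL-Real_Asymp.Real_Asymp"
begin


definition pp :: "real \<Rightarrow> nat \<Rightarrow> real" where
  "pp \<mu> k = exp (-\<mu>) * \<mu>^k / fact k"

lemma pmf_poisson': "\<mu> \<ge> 0 \<Longrightarrow> pmf (poisson \<mu>) k = pp \<mu> k"
  by (cases "\<mu> = 0") (auto simp: poisson_def pp_def indicator_def)

lemma conv_poisson:
  assumes a: "a \<ge> 0" and b: "b \<ge> 0"
  shows "map_pmf (\<lambda>(y,s). y+s) (pair_pmf (poisson a) (poisson b)) = poisson (a+b)"
proof (rule pmf_eqI)
  fix k :: nat
  have pre: "(\<lambda>(y,s). y+s) -` {k} = (\<lambda>j. (j, k-j)) ` {..k}"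
    by (auto simp: image_iff)
  have inj: "inj_on (\<lambda>j. (j, k-j)) {..k}" by (auto simp: inj_on_def)
  have "pmf (map_pmf (\<lambda>(y,s). y+s) (pair_pmf (poisson a) (poisson b))) k
        = (\<Sum>j\<le>k. pp a j * pp b (k-j))"
    unfolding pmf_map pre
    by (subst measure_measure_pmf_finite) (auto simp: sum.reindex[OF inj] pmf_pair pmf_poisson' a b)
  also have "\<dots> = (\<Sum>j\<le>k. exp (-(a+b)) / fact k * (of_nat (k choose j) * a^j * b^(k-j)))"
  proof (rule sum.cong[OF refl])
    fix j assume "j \<in> {..k}"
    then have jk: "j \<le> k" by simp
    show "pp a j * pp b (k-j) = exp (-(a+b)) / fact k * (of_nat (k choose j) * a^j * b^(k-j))"
      unfolding pp_def binomial_fact[OF jk] by (simp add: exp_add field_simps exp_diff exp_minus_inverse)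
  qed
  also have "\<dots> = exp (-(a+b)) / fact k * (a+b)^k"
    by (simp add: binomial_ring sum_distrib_left)
  also have "\<dots> = pmf (poisson (a+b)) k" using a b by (simp add: pmf_poisson' pp_def)
  finally show "pmf (map_pmf (\<lambda>(y,s). y+s) (pair_pmf (poisson a) (poisson b))) k = pmf (poisson (a+b)) k" .
qed

lemma sum_law:
  assumes g: "\<gamma> \<ge> 0"
  shows "map_pmf (\<lambda>P. \<Sum>i=1..n. P i) (iid_poisson \<gamma> n) = poisson (real n * \<gamma>)"
proof (induction n)
  case 0
  then show ?case by (simp add: iid_poisson_def poisson_def)
next
  case (Suc n)
  have ins: "{1..Suc n} = insert (Suc n) {1..n}" by auto
  have "map_pmf (\<lambda>P. \<Sum>i=1..Suc n. P i) (iid_poisson \<gamma> (Suc n))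
     = map_pmf (\<lambda>(y,f). y + (\<Sum>i=1..n. f i)) (pair_pmf (poisson \<gamma>) (iid_poisson \<gamma> n))"
    unfolding iid_poisson_def ins
    by (subst Pi_pmf_insert) (auto simp: map_pmf_comp case_prod_beta intro!: map_pmf_cong sum.cong)
  also have "\<dots> = map_pmf (\<lambda>(y,s). y+s) (map_pmf (\<lambda>(a, b). (id a, (\<lambda>f. \<Sum>i=1..n. f i) b)) (pair_pmf (poisson \<gamma>) (iid_poisson \<gamma> n)))"
    by (simp add: map_pmf_comp case_prod_beta split_beta')
  also have "\<dots> = map_pmf (\<lambda>(y,s). y+s) (pair_pmf (poisson \<gamma>) (poisson (real n * \<gamma>)))"
    unfolding map_pair using Suc by simp
  also have "\<dots> = poisson (\<gamma> + real n * \<gamma>)" using g by (intro conv_poisson) auto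
  finally show ?case by (simp add: algebra_simps)
qed



lemma pp_nonneg: "\<mu> \<ge> 0 \<Longrightarrow> pp \<mu> k \<ge> 0"
  by (simp add: pp_def)

lemma DERIV_pp_sum:
  "DERIV (\<lambda>\<mu>. \<Sum>k\<le>m. pp \<mu> k) \<mu> :> - pp \<mu> m"
proof (induction m)
  case 0
  show ?case unfolding pp_def by (auto intro!: derivative_eq_intros)
next
  case (Suc m)
  have d: "DERIV (\<lambda>\<mu>. pp \<mu> (Suc m)) \<mu> :> pp \<mu> m - pp \<mu> (Suc m)"
    unfolding pp_def
    apply (rule derivative_eq_intros refl | simp)+
    apply (simp add: divide_simps)
    done
  show ?case using DERIV_add[OF Suc d] by simp
qed

lemma sum_AB: "(A::nat) \<ge> 1 \<Longrightarrow> A \<le> B \<Longrightarrow> (\<Sum>k\<in>{A..B}. g k) = (\<Sum>k\<le>B. g k) - (\<Sum>k\<le>A-1. (g k :: real))"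
proof -
  assume "A \<ge> 1" "A \<le> B"
  then have "{..B} = {..A-1} \<union> {A..B}" by (auto; arith)
  moreover have "{..A-1} \<inter> {A..B} = {}" using \<open>A \<ge> 1\<close> by auto
  ultimately
  show ?thesis by (simp add: sum.union_disjoint)
qed

lemma unimodal_AB:
  assumes "A \<le> B" "0 \<le> \<mu>1" "\<mu>1 \<le> \<mu>" "\<mu> \<le> \<mu>2"
  shows "min (\<Sum>k\<in>{A..B}. pp \<mu>1 k) (\<Sum>k\<in>{A..B}. pp \<mu>2 k) \<le> (\<Sum>k\<in>{A..B}. pp \<mu> k)"
proof (cases "A = 0")
  case True
  have e: "{A..B} = {..B}" using True by auto
  have "(\<Sum>k\<le>B. pp \<mu>2 k) \<le> (\<Sum>k\<le>B. pp \<mu> k)"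
    by (rule DERIV_nonpos_imp_nonincreasing[OF assms(4)]) 
       (use DERIV_pp_sum assms in \<open>auto intro!: exI pp_nonneg\<close>)
  then show ?thesis unfolding e by simp
next
  case False
  define F where "F = (\<lambda>\<mu>. (\<Sum>k\<le>B. pp \<mu> k) - (\<Sum>k\<le>A-1. pp \<mu> k))"
  define D where "D = (\<lambda>\<mu>. pp \<mu> (A-1) - pp \<mu> B)"
  have FD: "DERIV F t :> D t" for t
    unfolding F_def D_def using DERIV_diff[OF DERIV_pp_sum DERIV_pp_sum] by simp
  have Fe: "(\<Sum>k\<in>{A..B}. pp t k) = F t" for t
    unfolding F_def using sum_AB[of A B] False assms by auto
  have mono: "D s < 0" if "0 \<le> t" "t \<le> s" "D t < 0" for s t
  proof -
    define d where "d = B - (A - 1)"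
    have "d > 0" using False assms(1) unfolding d_def by simp
    have Bd: "B = (A-1) + d" using False assms(1) unfolding d_def by simp
    have ppB: "pp u B = pp u (A-1) * u^d * fact (A-1) / fact B" for u
      unfolding pp_def Bd by (simp add: power_add field_simps)
    have ppp: "pp u (A-1) \<ge> 0" if "u \<ge> 0" for u using that by (simp add: pp_def)
    have "pp t (A-1) > 0 \<and> fact B < t^d * fact (A-1)"
    proof -
      from that(3) have "pp t (A-1) * 1 < pp t (A-1) * (t^d * fact (A-1) / fact B)"
        unfolding D_def ppB by (simp add: field_simps)
      moreover have "pp t (A-1) \<ge> 0" using ppp that by auto
      ultimately have p: "pp t (A-1) > 0"
        by (cases "pp t (A-1) = 0") auto
      with \<open>pp t (A-1) * 1 < _\<close> have "1 < t^d * fact (A-1) / fact B"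
        using mult_less_cancel_left_pos[of "pp t (A-1)" 1 "t^d * fact (A-1) / fact B"] by blast
      note p = p this
      then show ?thesis by (simp add: less_divide_eq)
    qed
    then have tpos: "t > 0"
      using that(1) \<open>d > 0\<close> by (cases "t = 0") (auto simp: pp_def Bd zero_power)
    then have spos: "s > 0" using that by simp
    have "t^d \<le> s^d" using that by (intro power_mono) auto
    then have "fact B < s^d * fact (A-1)"
      using \<open>pp t (A-1) > 0 \<and> _\<close> mult_right_mono[of "t^d" "s^d" "fact (A-1)"]
      by (smt (verit) fact_ge_zero)
    moreover have "pp s (A-1) > 0" using spos by (simp add: pp_def)
    ultimately have "pp s (A-1) * 1 < pp s (A-1) * (s^d * fact (A-1) / fact B)"
      by (intro mult_strict_left_mono) (auto simp: field_simps)
    then show ?thesis unfolding D_def ppB by (simp add: field_simps)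
  qed
  show ?thesis
  proof (cases "\<forall>t. \<mu>1 \<le> t \<and> t \<le> \<mu> \<longrightarrow> D t \<ge> 0")
    case True
    have "F \<mu>1 \<le> F \<mu>"
      by (rule DERIV_nonneg_imp_nondecreasing[OF assms(3)]) (use FD True in blast)
    then show ?thesis unfolding Fe by simp
  next
    case False
    then obtain t where t: "\<mu>1 \<le> t" "t \<le> \<mu>" "D t < 0" by (auto simp: not_le)
    have "F \<mu>2 \<le> F \<mu>"
    proof (rule DERIV_nonpos_imp_nonincreasing[OF assms(4)])
      fix s assume s: "\<mu> \<le> s" "s \<le> \<mu>2"
      have "0 \<le> t" "t \<le> s" using t s assms by auto
      then have "D s < 0" using mono t(3) by blast
      then show "\<exists>y. DERIV F s :> y \<and> y \<le> 0" using FD by (intro exI[of _ "D s"]) auto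
    qed
    then show ?thesis unfolding Fe by simp
  qed
qed



definition Kset :: "real \<Rightarrow> real \<Rightarrow> nat \<Rightarrow> nat set" where
  "Kset x \<delta> n = {k. real k / real n \<in> {x - \<delta><..<x + \<delta>}}"

lemma Kset_finite: "n > 0 \<Longrightarrow> finite (Kset x \<delta> n)"
proof -
  assume n: "n > 0"
  have "Kset x \<delta> n \<subseteq> {..nat \<lceil>real n * (x + \<delta>)\<rceil>}"
  proof
    fix k assume "k \<in> Kset x \<delta> n"
    then have "real k / real n < x + \<delta>" by (simp add: Kset_def)
    then have "real k < real n * (x + \<delta>)" using n by (simp add: divide_less_eq mult.commute)
    then show "k \<in> {..nat \<lceil>real n * (x + \<delta>)\<rceil>}" by (simp add: le_nat_iff) linarith
  qed
  then show ?thesis using finite_subset by blast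
qed

lemma Q_eq:
  assumes g: "\<gamma> \<ge> 0" and n: "n > 0"
  shows "measure_pmf.prob (iid_poisson \<gamma> n)
            {P. (\<Sum>i=1..n. real (P i)) / real n \<in> {x - \<delta><..<x + \<delta>}}
         = (\<Sum>k\<in>Kset x \<delta> n. pp (real n * \<gamma>) k)"
proof -
  have "{P. (\<Sum>i=1..n. real (P i)) / real n \<in> {x - \<delta><..<x + \<delta>}}
        = (\<lambda>P. \<Sum>i=1..n. P i) -` Kset x \<delta> n"
    by (auto simp: Kset_def)
  then have "measure_pmf.prob (iid_poisson \<gamma> n)
            {P. (\<Sum>i=1..n. real (P i)) / real n \<in> {x - \<delta><..<x + \<delta>}}
      = measure (map_pmf (\<lambda>P. \<Sum>i=1..n. P i) (iid_poisson \<gamma> n)) (Kset x \<delta> n)"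
    by simp
  also have "\<dots> = (\<Sum>k\<in>Kset x \<delta> n. pp (real n * \<gamma>) k)"
    unfolding sum_law[OF g] using Kset_finite[OF n] g
    by (simp add: measure_measure_pmf_finite pmf_poisson')
  finally show ?thesis .
qed

lemma convex_nat_set:
  fixes S :: "nat set"
  assumes "finite S" "S \<noteq> {}" "\<And>a b k. a \<in> S \<Longrightarrow> b \<in> S \<Longrightarrow> a \<le> k \<Longrightarrow> k \<le> b \<Longrightarrow> k \<in> S"
  shows "S = {Min S..Max S}"
proof
  show "S \<subseteq> {Min S..Max S}" using assms(1) by auto
  show "{Min S..Max S} \<subseteq> S"
  proof
    fix k assume "k \<in> {Min S..Max S}"
    then show "k \<in> S" using assms(3)[OF Min_in[OF assms(1,2)] Max_in[OF assms(1,2)]] by auto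
  qed
qed

lemma unimodal_K:
  assumes "n > 0" "0 \<le> \<mu>1" "\<mu>1 \<le> \<mu>" "\<mu> \<le> \<mu>2"
  shows "min (\<Sum>k\<in>Kset x \<delta> n. pp \<mu>1 k) (\<Sum>k\<in>Kset x \<delta> n. pp \<mu>2 k) \<le> (\<Sum>k\<in>Kset x \<delta> n. pp \<mu> k)"
proof (cases "Kset x \<delta> n = {}")
  case True then show ?thesis by simp
next
  case False
  have conv: "k \<in> Kset x \<delta> n" if "a \<in> Kset x \<delta> n" "b \<in> Kset x \<delta> n" "a \<le> k" "k \<le> b" for a b k
  proof -
    have "real a / real n \<le> real k / real n" "real k / real n \<le> real b / real n"
      using that by (auto intro: divide_right_mono)
    then show ?thesis using that by (auto simp: Kset_def)
  qed
  have e: "Kset x \<delta> n = {Min (Kset x \<delta> n)..Max (Kset x \<delta> n)}"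
    by (rule convex_nat_set[OF Kset_finite[OF assms(1)] False conv])
  have "Min (Kset x \<delta> n) \<le> Max (Kset x \<delta> n)"
    using False Kset_finite[OF assms(1)] by simp
  then show ?thesis by (subst (1 2 3) e) (rule unimodal_AB[OF _ assms(2-4)])
qed



definition QQ :: "real \<Rightarrow> real \<Rightarrow> nat \<Rightarrow> real \<Rightarrow> real" where
  "QQ x \<delta> n \<gamma> = (\<Sum>k\<in>Kset x \<delta> n. pp (real n * \<gamma>) k)"

definition hh :: "real \<Rightarrow> real \<Rightarrow> nat \<Rightarrow> real \<Rightarrow> ereal" where
  "hh x \<delta> n \<gamma> = ereal (1 / real n) * eln (QQ x \<delta> n \<gamma>)"

lemma eln_mono: "0 \<le> p \<Longrightarrow> p \<le> q \<Longrightarrow> eln p \<le> eln q"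
  by (auto simp: eln_def)

lemma QQ_nonneg: "\<gamma> \<ge> 0 \<Longrightarrow> QQ x \<delta> n \<gamma> \<ge> 0"
  unfolding QQ_def by (intro sum_nonneg pp_nonneg) auto

lemma eln_tendsto:
  assumes "\<And>j. p j \<ge> 0" "p \<longlonglongrightarrow> l"
  shows "(\<lambda>j. eln (p j)) \<longlonglongrightarrow> eln l"
proof -
  have l: "l \<ge> 0" using assms by (intro LIMSEQ_le_const) auto
  show ?thesis
  proof (cases "l = 0")
    case False
    with l have lp: "l > 0" by simp
    then have ev: "eventually (\<lambda>j. p j > 0) sequentially"
      using assms(2) order_tendstoD(1) by blast
    have "(\<lambda>j. ereal (ln (p j))) \<longlonglongrightarrow> ereal (ln l)"
      using lp assms(2) by (intro tendsto_intros) auto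
    then show ?thesis
      using False by (subst tendsto_cong[OF eventually_mono[OF ev]]) (auto simp: eln_def)
  next
    case True
    have "eln l = -\<infinity>" using True by (simp add: eln_def)
    moreover have "(\<lambda>j. eln (p j)) \<longlonglongrightarrow> -\<infinity>" unfolding tendsto_MInfty
    proof (intro allI)
      fix r
      have "eventually (\<lambda>j. p j < exp r) sequentially"
        using assms(2) True order_tendstoD(2) by force
      then show "eventually (\<lambda>j. eln (p j) < ereal r) sequentially"
      proof (rule eventually_mono)
        fix j assume "p j < exp r"
        then show "eln (p j) < ereal r"
          using assms(1)[of j] ln_less_cancel_iff[of "p j" "exp r"] by (auto simp: eln_def)
      qed
    qed
    ultimately show ?thesis by simp
  qed
qed

lemma QQ_tendsto: "g \<longlonglongrightarrow> g0 \<Longrightarrow> (\<lambda>j. QQ x \<delta> n (g j)) \<longlonglongrightarrow> QQ x \<delta> n g0"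
  unfolding QQ_def pp_def by (intro tendsto_intros) auto

lemma hh_tendsto:
  assumes "\<And>j. g j \<ge> 0" "g \<longlonglongrightarrow> g0"
  shows "(\<lambda>j. hh x \<delta> n (g j)) \<longlonglongrightarrow> hh x \<delta> n g0"
  unfolding hh_def
  by (intro tendsto_cmult_ereal eln_tendsto QQ_tendsto QQ_nonneg assms) auto

lemma INF_eq:
  assumes n: "n > 0" and lam: "lam \<ge> 0" and eps: "\<epsilon> > 0"
  shows "(INF \<gamma>\<in>{lam - \<epsilon><..<lam + \<epsilon>} \<inter> {0..}. hh x \<delta> n \<gamma>)
         = min (hh x \<delta> n (max 0 (lam - \<epsilon>))) (hh x \<delta> n (lam + \<epsilon>))"
    (is "(INF \<gamma>\<in>?G. _) = _")
proof -
  define a where "a = max 0 (lam - \<epsilon>)"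
  define b where "b = lam + \<epsilon>"
  have "(INF \<gamma>\<in>?G. hh x \<delta> n \<gamma>) = min (hh x \<delta> n a) (hh x \<delta> n b)"
proof (rule antisym)
  have mono: "hh x \<delta> n \<gamma> \<ge> hh x \<delta> n \<gamma>'" if "0 \<le> \<gamma>'" "QQ x \<delta> n \<gamma>' \<le> QQ x \<delta> n \<gamma>" for \<gamma> \<gamma>'
    unfolding hh_def using that QQ_nonneg
    by (intro ereal_mult_left_mono eln_mono) auto
  show "min (hh x \<delta> n a) (hh x \<delta> n b) \<le> (INF \<gamma>\<in>?G. hh x \<delta> n \<gamma>)"
  proof (rule INF_greatest)
    fix \<gamma> assume g: "\<gamma> \<in> ?G"
    have "min (QQ x \<delta> n a) (QQ x \<delta> n b) \<le> QQ x \<delta> n \<gamma>"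
      unfolding QQ_def using g n
      unfolding a_def b_def by (intro unimodal_K) (auto intro!: mult_left_mono)
    then show "min (hh x \<delta> n a) (hh x \<delta> n b) \<le> hh x \<delta> n \<gamma>"
      using mono[of a \<gamma>] mono[of b \<gamma>] lam eps unfolding a_def b_def
      by (cases "QQ x \<delta> n a \<le> QQ x \<delta> n b") (auto simp: min_def split: if_splits)
  qed
  have lim: "(INF \<gamma>\<in>?G. hh x \<delta> n \<gamma>) \<le> hh x \<delta> n g0"
    if "\<And>j. g j \<in> ?G" "g \<longlonglongrightarrow> g0" for g g0
  proof -
    have "(\<lambda>j. hh x \<delta> n (g j)) \<longlonglongrightarrow> hh x \<delta> n g0"
      using that by (intro hh_tendsto) auto
    moreover have "\<forall>j. (INF \<gamma>\<in>?G. hh x \<delta> n \<gamma>) \<le> hh x \<delta> n (g j)"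
      using that by (auto intro: INF_lower)
    ultimately show ?thesis
      by (intro tendsto_le[OF trivial_limit_sequentially _ tendsto_const]) auto
  qed
  have s: "(\<lambda>j. \<epsilon> / (real j + 2)) \<longlonglongrightarrow> 0"
    by (intro tendsto_divide_0[OF tendsto_const]) real_asymp
  have "(INF \<gamma>\<in>?G. hh x \<delta> n \<gamma>) \<le> hh x \<delta> n a"
  proof (rule lim)
    fix j :: nat
    have "\<epsilon> / (real j + 2) < \<epsilon>" "\<epsilon> / (real j + 2) > 0" using eps by (auto simp: divide_less_eq)
    then show "a + \<epsilon> / (real j + 2) \<in> ?G" using lam unfolding a_def by auto
    show "(\<lambda>j. a + \<epsilon> / (real j + 2)) \<longlonglongrightarrow> a"
      using tendsto_add[OF tendsto_const s] by simp
  qed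
  moreover have "(INF \<gamma>\<in>?G. hh x \<delta> n \<gamma>) \<le> hh x \<delta> n b"
  proof (rule lim)
    fix j :: nat
    have "\<epsilon> / (real j + 2) < \<epsilon>" "\<epsilon> / (real j + 2) > 0" using eps by (auto simp: divide_less_eq)
    then show "b - \<epsilon> / (real j + 2) \<in> ?G" using lam unfolding b_def by auto
    show "(\<lambda>j. b - \<epsilon> / (real j + 2)) \<longlonglongrightarrow> b"
      using tendsto_diff[OF tendsto_const s] by simp
  qed
  ultimately show "(INF \<gamma>\<in>?G. hh x \<delta> n \<gamma>) \<le> min (hh x \<delta> n a) (hh x \<delta> n b)" by simp
qed
  then show ?thesis unfolding a_def b_def .
qed



lemma ln_fact_upper: "ln (fact k) \<le> (real k + 1) * ln (real k + 1) - real k"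
proof (induction k)
  case 0 then show ?case by simp
next
  case (Suc k)
  have k1: "real k + 1 > 0" "real k + 2 > 0" by auto
  have "ln ((real k + 1) / (real k + 2)) \<le> (real k + 1) / (real k + 2) - 1"
    by (rule ln_le_minus_one) (use k1 in auto)
  also have "\<dots> = - 1 / (real k + 2)" using k1 by (simp add: field_simps)
  finally have "ln (real k + 1) - ln (real k + 2) \<le> - 1 / (real k + 2)"
    using k1 by (simp add: ln_div)
  then have "(real k + 2) * (ln (real k + 1) - ln (real k + 2)) \<le> -1"
    using k1 by (simp add: field_simps)
  then have key: "(real k + 2) * ln (real k + 1) + 1 \<le> (real k + 2) * ln (real k + 2)"
    by (simp add: algebra_simps)
  have "ln (fact (Suc k)) = ln (real k + 1) + ln (fact k)"
    by (simp add: ln_mult add.commute)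
  also have "\<dots> \<le> ln (real k + 1) + ((real k + 1) * ln (real k + 1) - real k)"
    using Suc by simp
  also have "\<dots> \<le> (real k + 2) * ln (real k + 2) - (real k + 1)"
    using key by (simp add: algebra_simps)
  finally show ?case by (simp add: add.commute)
qed

lemma ln_fact_lower: "real k * ln (real k) - real k \<le> ln (fact k)"
proof (induction k)
  case 0 then show ?case by simp
next
  case (Suc k)
  show ?case
  proof (cases "k = 0")
    case True then show ?thesis by simp
  next
    case False
    then have k0: "real k > 0" by simp
    have "ln ((real k + 1) / real k) \<le> (real k + 1) / real k - 1"
      by (rule ln_le_minus_one) (use k0 in auto)
    also have "\<dots> = 1 / real k" using k0 by (simp add: field_simps)
    finally have "ln (real k + 1) - ln (real k) \<le> 1 / real k"
      using k0 by (simp add: ln_div)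
    then have "real k * (ln (real k + 1) - ln (real k)) \<le> 1"
      using k0 by (simp add: field_simps)
    then have key: "real k * ln (real k + 1) \<le> real k * ln (real k) + 1"
      by (simp add: algebra_simps)
    have "ln (fact (Suc k)) = ln (real k + 1) + ln (fact k)"
      by (simp add: ln_mult add.commute)
    moreover have "(real k + 1) * ln (real k + 1) - (real k + 1) \<le> ln (real k + 1) + (real k * ln (real k) - real k)"
      using key by (simp add: algebra_simps)
    ultimately show ?thesis using Suc by (simp add: add.commute)
  qed
qed

lemma ln_pp: "\<mu> > 0 \<Longrightarrow> ln (pp \<mu> k) = - \<mu> + real k * ln \<mu> - ln (fact k)"
  by (simp add: pp_def ln_div ln_mult ln_realpow)

lemma pp_pos: "\<mu> > 0 \<Longrightarrow> pp \<mu> k > 0"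
  by (simp add: pp_def)



definition lr :: "real \<Rightarrow> real \<Rightarrow> real" where
  "lr \<gamma> a = \<gamma> - a + a * ln (a / \<gamma>)"

lemma ell_pos: "\<gamma> > 0 \<Longrightarrow> a \<ge> 0 \<Longrightarrow> ell \<gamma> a = ereal (lr \<gamma> a)"
  by (auto simp: ell_def lr_def)

lemma pp_chernoff:
  assumes n: "n > 0" and g: "\<gamma> > 0"
  shows "pp (real n * \<gamma>) k \<le> exp (- real n * lr \<gamma> (real k / real n))"
proof -
  have mu: "real n * \<gamma> > 0" using n g by simp
  have "ln (pp (real n * \<gamma>) k) \<le> - real n * lr \<gamma> (real k / real n)"
  proof (cases "k = 0")
    case True then show ?thesis using mu by (simp add: ln_pp lr_def)
  next
    case False
    then have k: "real k > 0" by simp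
    have "ln (pp (real n * \<gamma>) k) \<le> - (real n * \<gamma>) + real k * ln (real n * \<gamma>) - (real k * ln (real k) - real k)"
      using ln_fact_lower[of k] by (simp add: ln_pp[OF mu])
    also have "\<dots> = - real n * lr \<gamma> (real k / real n)"
      using n g k by (simp add: lr_def ln_div algebra_simps)
    finally show ?thesis .
  qed
  then show ?thesis using pp_pos[OF mu] by (metis exp_le_cancel_iff exp_ln)
qed

lemma card_K:
  assumes n: "n > 0" and d: "\<delta> > 0"
  shows "real (card (Kset x \<delta> n)) \<le> 2 * \<delta> * real n + 1"
proof (cases "Kset x \<delta> n = {}")
  case True
  then show ?thesis using d by simp
next
  case False
  let ?K = "Kset x \<delta> n"
  have fin: "finite ?K" using Kset_finite[OF n] .
  have "?K \<subseteq> {Min ?K..Max ?K}" using fin by auto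
  then have "card ?K \<le> card {Min ?K..Max ?K}" by (intro card_mono) auto
  also have "\<dots> = Max ?K + 1 - Min ?K" by simp
  finally have c: "real (card ?K) \<le> real (Max ?K) + 1 - real (Min ?K)"
    using Min_le[OF fin Max_in[OF fin False]] by linarith
  have "Max ?K \<in> ?K" "Min ?K \<in> ?K" using fin False by auto
  then have "real (Max ?K) / real n < x + \<delta>" "x - \<delta> < real (Min ?K) / real n"
    by (auto simp: Kset_def)
  then have "real (Max ?K) < real n * (x + \<delta>)" "real n * (x - \<delta>) < real (Min ?K)"
    using n by (auto simp: field_simps)
  then show ?thesis using c by (simp add: algebra_simps)
qed

lemma hh_lower:
  assumes n: "n > 0" and g: "\<gamma> > 0" and k: "k \<in> Kset x \<delta> n"
  shows "ereal (ln (pp (real n * \<gamma>) k) / real n) \<le> hh x \<delta> n \<gamma>"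
proof -
  have mu: "real n * \<gamma> > 0" using n g by simp
  have le: "pp (real n * \<gamma>) k \<le> QQ x \<delta> n \<gamma>"
    unfolding QQ_def using Kset_finite[OF n] k mu
    by (intro member_le_sum) (auto intro: pp_nonneg)
  have pos: "QQ x \<delta> n \<gamma> > 0" using le pp_pos[OF mu, of k] by linarith
  have "ln (pp (real n * \<gamma>) k) / real n \<le> ln (QQ x \<delta> n \<gamma>) / real n"
    using le pp_pos[OF mu, of k] n by (intro divide_right_mono) auto
  then show ?thesis using pos by (simp add: hh_def eln_def)
qed

lemma hh_upper:
  assumes n: "n > 0" and g: "\<gamma> > 0" and d: "\<delta> > 0"
    and L: "\<And>k. k \<in> Kset x \<delta> n \<Longrightarrow> Lr \<le> lr \<gamma> (real k / real n)"
  shows "hh x \<delta> n \<gamma> \<le> ereal (ln (2 * \<delta> * real n + 1) / real n - Lr)"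
proof (cases "QQ x \<delta> n \<gamma> = 0")
  case True then show ?thesis using n by (simp add: hh_def eln_def)
next
  case False
  have q0: "QQ x \<delta> n \<gamma> \<ge> 0" using g by (intro QQ_nonneg) simp
  with False have qp: "QQ x \<delta> n \<gamma> > 0" by simp
  have "QQ x \<delta> n \<gamma> \<le> (\<Sum>k\<in>Kset x \<delta> n. exp (- real n * Lr))"
    unfolding QQ_def
  proof (rule sum_mono)
    fix k assume "k \<in> Kset x \<delta> n"
    then have "- real n * lr \<gamma> (real k / real n) \<le> - real n * Lr" using L n by simp
    then show "pp (real n * \<gamma>) k \<le> exp (- real n * Lr)"
      using pp_chernoff[OF n g, of k] by (meson exp_le_cancel_iff order_trans)
  qed
  also have "\<dots> = real (card (Kset x \<delta> n)) * exp (- real n * Lr)" by simp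
  also have "\<dots> \<le> (2 * \<delta> * real n + 1) * exp (- real n * Lr)"
    by (intro mult_right_mono card_K n d) auto
  finally have "ln (QQ x \<delta> n \<gamma>) \<le> ln ((2 * \<delta> * real n + 1) * exp (- real n * Lr))"
    using qp by simp
  also have "\<dots> = ln (2 * \<delta> * real n + 1) - real n * Lr"
  proof -
    have "2 * \<delta> * real n + 1 > 0" using mult_nonneg_nonneg[of "2*\<delta>" "real n"] d by linarith
    then show ?thesis by (subst ln_mult) auto
  qed
  finally have "ln (QQ x \<delta> n \<gamma>) / real n \<le> (ln (2 * \<delta> * real n + 1) - real n * Lr) / real n"
    using n by (intro divide_right_mono) auto
  also have "\<dots> = ln (2 * \<delta> * real n + 1) / real n - Lr" using n by (simp add: field_simps)
  finally show ?thesis using qp by (simp add: hh_def eln_def)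
qed



lemma lower_seq:
  assumes g: "\<gamma> > 0" and a: "a > 0" and aI: "x - \<delta> < a" "a < x + \<delta>"
  shows "\<exists>f. f \<longlonglongrightarrow> - lr \<gamma> a \<and> eventually (\<lambda>n. ereal (f n) \<le> hh x \<delta> n \<gamma>) sequentially"
proof -
  define k where "k = (\<lambda>n::nat. nat \<lceil>real n * a\<rceil>)"
  define b where "b = (\<lambda>n::nat. real (k n) / real n)"
  define f where "f = (\<lambda>n::nat. - \<gamma> + b n * ln (\<gamma> / (b n + 1 / real n)) - ln (real (k n) + 1) / real n + b n)"
  have kr: "real (k n) = of_int \<lceil>real n * a\<rceil>" for n
    unfolding k_def using a by (simp add: mult_nonneg_nonneg)
  have kb: "real n * a \<le> real (k n)" "real (k n) < real n * a + 1" for n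
    unfolding kr by linarith+
  have bb: "a \<le> b n" "b n \<le> a + 1 / real n" if "n > 0" for n
    using kb[of n] that by (auto simp: b_def field_simps)
  have inv0: "(\<lambda>n. 1 / real n) \<longlonglongrightarrow> 0" by real_asymp
  have blim: "b \<longlonglongrightarrow> a"
  proof (rule tendsto_sandwich[of "\<lambda>_. a" b sequentially "\<lambda>n. a + 1 / real n"])
    show "eventually (\<lambda>n. a \<le> b n) sequentially" "eventually (\<lambda>n. b n \<le> a + 1 / real n) sequentially"
      using bb by (auto intro: eventually_sequentiallyI[of 1])
    show "(\<lambda>n. a + 1 / real n) \<longlonglongrightarrow> a" using tendsto_add[OF tendsto_const inv0] by simp
  qed simp
  have lnlim: "(\<lambda>n. ln (real (k n) + 1) / real n) \<longlonglongrightarrow> 0"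
  proof (rule tendsto_sandwich[of "\<lambda>_. 0" _ sequentially "\<lambda>n. ln (a + 2) * (1 / real n) + ln (real n) / real n"])
    show "eventually (\<lambda>n. 0 \<le> ln (real (k n) + 1) / real n) sequentially" by simp
    show "eventually (\<lambda>n. ln (real (k n) + 1) / real n \<le> ln (a + 2) * (1 / real n) + ln (real n) / real n) sequentially"
    proof (rule eventually_sequentiallyI[of 1])
      fix n :: nat assume n: "1 \<le> n"
      have "real (k n) + 1 \<le> (a + 2) * real n"
        using kb[of n] n a by (simp add: algebra_simps)
      then have "ln (real (k n) + 1) \<le> ln ((a + 2) * real n)" by simp
      also have "\<dots> = ln (a + 2) + ln (real n)" using a n by (simp add: ln_mult)
      finally show "ln (real (k n) + 1) / real n \<le> ln (a + 2) * (1 / real n) + ln (real n) / real n"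
        using n by (simp add: divide_right_mono add_divide_distrib[symmetric])
    qed
    have "(\<lambda>n. ln (real n) / real n) \<longlonglongrightarrow> 0" by real_asymp
    then show "(\<lambda>n. ln (a + 2) * (1 / real n) + ln (real n) / real n) \<longlonglongrightarrow> 0"
      using tendsto_add[OF tendsto_mult[OF tendsto_const inv0]] by fastforce
  qed simp
  have flim: "f \<longlonglongrightarrow> - \<gamma> + a * ln (\<gamma> / (a + 0)) - 0 + a"
    unfolding f_def using a g
    by (intro tendsto_intros blim inv0 lnlim) auto
  have "- \<gamma> + a * ln (\<gamma> / (a + 0)) - 0 + a = - lr \<gamma> a"
    using a g by (simp add: lr_def ln_div algebra_simps)
  note flim = flim[unfolded this]
  have evI: "eventually (\<lambda>n. x - \<delta> < b n \<and> b n < x + \<delta>) sequentially"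
    using order_tendstoD(1)[OF blim aI(1)] order_tendstoD(2)[OF blim aI(2)] by (auto elim: eventually_elim2)
  have "eventually (\<lambda>n. ereal (f n) \<le> hh x \<delta> n \<gamma>) sequentially"
    using eventually_conj[OF evI eventually_gt_at_top[of 0]]
  proof (rule eventually_mono)
    fix n :: nat assume H: "(x - \<delta> < b n \<and> b n < x + \<delta>) \<and> 0 < n"
    then have n: "n > 0" by simp
    have kin: "k n \<in> Kset x \<delta> n" using H by (simp add: Kset_def b_def)
    have mu: "real n * \<gamma> > 0" using n g by simp
    have "ln (pp (real n * \<gamma>) (k n)) \<ge> - (real n * \<gamma>) + real (k n) * ln (real n * \<gamma>)
          - ((real (k n) + 1) * ln (real (k n) + 1) - real (k n))"
      using ln_fact_upper[of "k n"] by (simp add: ln_pp[OF mu])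
    also have "- (real n * \<gamma>) + real (k n) * ln (real n * \<gamma>)
          - ((real (k n) + 1) * ln (real (k n) + 1) - real (k n)) = real n * f n"
    proof -
      have e1: "b n + 1 / real n = (real (k n) + 1) / real n" using n by (simp add: b_def field_simps)
      have "ln (\<gamma> / (b n + 1 / real n)) = ln (real n * \<gamma>) - ln (real (k n) + 1)"
        unfolding e1 using n g by (simp add: ln_div ln_mult)
      then show ?thesis using n unfolding f_def
        apply (simp add: b_def field_simps)
        apply (simp flip: distrib_left)
        done
    qed
    finally have "f n \<le> ln (pp (real n * \<gamma>) (k n)) / real n"
      using n by (simp add: field_simps mult.commute)
    then have "ereal (f n) \<le> ereal (ln (pp (real n * \<gamma>) (k n)) / real n)" by simp
    also have "\<dots> \<le> hh x \<delta> n \<gamma>" by (rule hh_lower[OF n g kin])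
    finally show "ereal (f n) \<le> hh x \<delta> n \<gamma>" .
  qed
  then show ?thesis using flim by blast
qed



lemma ln_lim: "\<delta> > 0 \<Longrightarrow> (\<lambda>n. ln (2 * \<delta> * real n + 1) / real n) \<longlonglongrightarrow> 0"
  by real_asymp

lemma pointwise_pos:
  assumes g: "\<gamma> > 0" and d: "\<delta> > 0"
  shows "(\<lambda>n. hh x \<delta> n \<gamma>) \<longlonglongrightarrow> - (INF a\<in>{x - \<delta><..<x + \<delta>}. ell \<gamma> a)"
proof -
  define L where "L = (INF a\<in>{x - \<delta><..<x + \<delta>}. ell \<gamma> a)"
  show ?thesis unfolding L_def[symmetric]
  proof (rule order_tendstoI)
    fix y assume y: "y < - L"
    have "- L = (SUP a\<in>{x - \<delta><..<x + \<delta>}. - ell \<gamma> a)"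
      unfolding L_def by (simp add: ereal_SUP_uminus_eq)
    with y obtain a where aI: "a \<in> {x - \<delta><..<x + \<delta>}" and ya: "y < - ell \<gamma> a"
      by (auto simp: less_SUP_iff)
    have a0: "a \<ge> 0"
    proof (rule ccontr)
      assume "\<not> a \<ge> 0"
      then have "ell \<gamma> a = \<infinity>" by (simp add: ell_def)
      with ya show False by simp
    qed
    show "eventually (\<lambda>n. y < hh x \<delta> n \<gamma>) sequentially"
    proof (cases "a = 0")
      case True
      show ?thesis
      proof (rule eventually_sequentiallyI[of 1])
        fix n :: nat assume "1 \<le> n"
        then have n: "n > 0" by simp
        have "0 \<in> Kset x \<delta> n" using aI True by (simp add: Kset_def)
        from hh_lower[OF n g this] have "ereal (- \<gamma>) \<le> hh x \<delta> n \<gamma>"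
          using n g by (simp add: ln_pp)
        moreover have "y < ereal (- \<gamma>)" using ya True g by (simp add: ell_def)
        ultimately show "y < hh x \<delta> n \<gamma>" by simp
      qed
    next
      case False
      with a0 have ap: "a > 0" by simp
      from lower_seq[OF g ap] aI obtain f where
        f: "f \<longlonglongrightarrow> - lr \<gamma> a" "eventually (\<lambda>n. ereal (f n) \<le> hh x \<delta> n \<gamma>) sequentially"
        by auto
      have "(\<lambda>n. ereal (f n)) \<longlonglongrightarrow> ereal (- lr \<gamma> a)" using f(1) by simp
      moreover have "y < ereal (- lr \<gamma> a)" using ya ell_pos[OF g a0] by simp
      ultimately have "eventually (\<lambda>n. y < ereal (f n)) sequentially"
        by (rule order_tendstoD(1))
      then show ?thesis using f(2) by (auto elim: eventually_elim2)
    qed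
  next
    fix y assume y: "- L < y"
    have Lle: "L \<le> ereal (lr \<gamma> (real k / real n))" if "n > 0" "k \<in> Kset x \<delta> n" for n k
    proof -
      have "real k / real n \<in> {x - \<delta><..<x + \<delta>}" using that by (simp add: Kset_def)
      then have "L \<le> ell \<gamma> (real k / real n)" unfolding L_def by (rule INF_lower)
      then show ?thesis using ell_pos[OF g, of "real k / real n"] by simp
    qed
    show "eventually (\<lambda>n. hh x \<delta> n \<gamma> < y) sequentially"
    proof (cases L)
      case (real Lr)
      have lim: "(\<lambda>n. ereal (ln (2 * \<delta> * real n + 1) / real n - Lr)) \<longlonglongrightarrow> ereal (0 - Lr)"
        using ln_lim[OF d] by (intro tendsto_intros)
      have "ereal (0 - Lr) < y" using y real by simp
      from order_tendstoD(2)[OF lim this]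
      have ev: "eventually (\<lambda>n. ereal (ln (2 * \<delta> * real n + 1) / real n - Lr) < y) sequentially" .
      have "eventually (\<lambda>n. hh x \<delta> n \<gamma> \<le> ereal (ln (2 * \<delta> * real n + 1) / real n - Lr)) sequentially"
      proof (rule eventually_sequentiallyI[of 1])
        fix n :: nat assume "1 \<le> n"
        then have n: "n > 0" by simp
        show "hh x \<delta> n \<gamma> \<le> ereal (ln (2 * \<delta> * real n + 1) / real n - Lr)"
          by (rule hh_upper[OF n g d]) (use Lle[OF n] real in auto)
      qed
      with ev show ?thesis by (auto elim: eventually_elim2)
    next
      case PInf
      show ?thesis
      proof (rule eventually_sequentiallyI[of 1])
        fix n :: nat assume "1 \<le> n"
        then have n: "n > 0" by simp
        have "Kset x \<delta> n = {}" using Lle[OF n] PInf by fastforce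
        then have "hh x \<delta> n \<gamma> = -\<infinity>" using n by (simp add: hh_def QQ_def eln_def)
        then show "hh x \<delta> n \<gamma> < y" using y PInf by simp
      qed
    next
      case MInf
      then show ?thesis using y by simp
    qed
  qed
qed

lemma pointwise_zero:
  assumes d: "\<delta> > 0"
  shows "(\<lambda>n. hh x \<delta> n 0) \<longlonglongrightarrow> - (INF a\<in>{x - \<delta><..<x + \<delta>}. ell 0 a)"
proof (cases "0 \<in> {x - \<delta><..<x + \<delta>}")
  case True
  have "(INF a\<in>{x - \<delta><..<x + \<delta>}. ell 0 a) = 0"
  proof (rule antisym)
    show "(INF a\<in>{x - \<delta><..<x + \<delta>}. ell 0 a) \<le> 0"
    proof -
      have e: "ell 0 0 = 0" by (simp add: ell_def zero_ereal_def)
      show ?thesis using INF_lower[OF True, of "ell 0"] unfolding e .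
    qed
    show "0 \<le> (INF a\<in>{x - \<delta><..<x + \<delta>}. ell 0 a)"
      by (rule INF_greatest) (simp add: ell_def)
  qed
  moreover have "eventually (\<lambda>n. hh x \<delta> n 0 = 0) sequentially"
  proof (rule eventually_sequentiallyI[of 1])
    fix n :: nat assume "1 \<le> n"
    then have n: "n > 0" by simp
    have "QQ x \<delta> n 0 = (\<Sum>k\<in>Kset x \<delta> n. if k = 0 then 1 else 0)"
      unfolding QQ_def by (intro sum.cong) (auto simp: pp_def)
    also have "\<dots> = 1" using True Kset_finite[OF n] by (simp add: Kset_def)
    finally show "hh x \<delta> n 0 = 0" by (simp add: hh_def eln_def)
  qed
  ultimately show ?thesis by (simp add: tendsto_eventually)
next
  case False
  have "(INF a\<in>{x - \<delta><..<x + \<delta>}. ell 0 a) = \<infinity>"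
    using False d by (intro INF_eq_const) (auto simp: ell_def)
  moreover have "eventually (\<lambda>n. hh x \<delta> n 0 = -\<infinity>) sequentially"
  proof (rule eventually_sequentiallyI[of 1])
    fix n :: nat assume "1 \<le> n"
    then have n: "n > 0" by simp
    have "QQ x \<delta> n 0 = (\<Sum>k\<in>Kset x \<delta> n. if k = 0 then 1 else 0)"
      unfolding QQ_def by (intro sum.cong) (auto simp: pp_def)
    also have "\<dots> = 0" using False Kset_finite[OF n] by (simp add: Kset_def)
    finally show "hh x \<delta> n 0 = -\<infinity>" using n by (simp add: hh_def eln_def)
  qed
  ultimately show ?thesis by (simp add: tendsto_eventually)
qed

lemma pointwise:
  assumes "\<gamma> \<ge> 0" "\<delta> > 0"
  shows "(\<lambda>n. hh x \<delta> n \<gamma>) \<longlonglongrightarrow> - (INF a\<in>{x - \<delta><..<x + \<delta>}. ell \<gamma> a)"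
  using pointwise_pos[of \<gamma> \<delta> x] pointwise_zero[of \<delta> x] assms by (cases "\<gamma> = 0") auto



theorem proposition5:
  fixes x \<delta> lam \<epsilon> :: real
  assumes "\<delta> > 0" and "lam \<ge> 0" and "\<epsilon> > 0"
  shows "((\<lambda>n::nat. INF \<gamma>\<in>{lam - \<epsilon><..<lam + \<epsilon>} \<inter> {0..}.
            ereal (1 / real n) *
            eln (measure_pmf.prob (iid_poisson \<gamma> n)
                   {P. (\<Sum>i=1..n. real (P i)) / real n \<in> {x - \<delta><..<x + \<delta>}}))
          \<longlongrightarrow> (MIN \<gamma>\<in>{max 0 (lam - \<epsilon>), lam + \<epsilon>}.
                 - (INF a\<in>{x - \<delta><..<x + \<delta>}. ell \<gamma> a))) sequentially"
proof -
  define R where "R = (\<lambda>\<gamma>. - (INF a\<in>{x - \<delta><..<x + \<delta>}. ell \<gamma> a))"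
  define a where "a = max 0 (lam - \<epsilon>)"
  define b where "b = lam + \<epsilon>"
  have ev: "eventually (\<lambda>n. min (hh x \<delta> n a) (hh x \<delta> n b) =
      (INF \<gamma>\<in>{lam - \<epsilon><..<lam + \<epsilon>} \<inter> {0..}.
            ereal (1 / real n) *
            eln (measure_pmf.prob (iid_poisson \<gamma> n)
                   {P. (\<Sum>i=1..n. real (P i)) / real n \<in> {x - \<delta><..<x + \<delta>}}))) sequentially"
  proof (rule eventually_sequentiallyI[of 1], goal_cases)
    case (1 n)
    then have n: "n > 0" by simp
    have "(INF \<gamma>\<in>{lam - \<epsilon><..<lam + \<epsilon>} \<inter> {0..}.
            ereal (1 / real n) *
            eln (measure_pmf.prob (iid_poisson \<gamma> n)
                   {P. (\<Sum>i=1..n. real (P i)) / real n \<in> {x - \<delta><..<x + \<delta>}}))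
        = (INF \<gamma>\<in>{lam - \<epsilon><..<lam + \<epsilon>} \<inter> {0..}. hh x \<delta> n \<gamma>)"
      unfolding hh_def QQ_def by (intro INF_cong refl, subst Q_eq[OF _ n]) auto
    also have "\<dots> = min (hh x \<delta> n a) (hh x \<delta> n b)"
      unfolding a_def b_def using INF_eq[OF n assms(2,3)] .
    finally show ?case by simp
  qed
  have "(\<lambda>n. min (hh x \<delta> n a) (hh x \<delta> n b)) \<longlonglongrightarrow> min (R a) (R b)"
    unfolding R_def using assms
    by (intro tendsto_min pointwise) (auto simp: a_def b_def)
  then have "(\<lambda>n. min (hh x \<delta> n a) (hh x \<delta> n b)) \<longlonglongrightarrow> (MIN \<gamma>\<in>{a, b}. R \<gamma>)"
    by (cases "a = b") (auto simp: min_def)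
  then have "((\<lambda>n::nat. INF \<gamma>\<in>{lam - \<epsilon><..<lam + \<epsilon>} \<inter> {0..}.
            ereal (1 / real n) *
            eln (measure_pmf.prob (iid_poisson \<gamma> n)
                   {P. (\<Sum>i=1..n. real (P i)) / real n \<in> {x - \<delta><..<x + \<delta>}}))
          \<longlongrightarrow> (MIN \<gamma>\<in>{a, b}. R \<gamma>)) sequentially"
    by (rule Lim_transform_eventually[OF _ ev])
  then show ?thesis unfolding R_def a_def b_def .
qed


end
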